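(* Assume (A.1) and (A.2). Let $\mathcal F_{co}^+$, $U_{\mathbb V}$, $(p^*_{co},q^*_{co})$ and the lines $\mathbb L_1,\dots,\mathbb L_4$ be as in the context. (i) If $(p^*_{co},q^*_{co})$ lies in the interior of $\mathcal F^+_{co}$, then $$\max_{(p,q)\in\mathcal F^+_{co}} U_{\mathbb V}(p,q)=U_{\mathbb V}(p^*_{co},q^*_{co}).$$ (ii) If $(p^*_{co},q^*_{co})$ does not lie in the interior of $\mathcal F^+_{co}$, then the maximum of $U_{\mathbb V}$ over $\mathcal F^+_{co}$ is attained on one of the non-empty boundary pieces other than the lines $\{q=0\}$ and $\{p=0\}$: $$\max_{(p,q)\in\mathcal F^+_{co}} U_{\mathbb V}(p,q)=\max_{l\in\{1,2,3,4\}}\Big\{\max_{(p,q)\in\mathcal F^+_{co}\cap\mathbb L_l} U_{\mathbb V}(p,q)\Big\},$$ where by convention the maximum over an empty set is $0$.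
   Context: Model (a Stackelberg pricing game). Parameters: market potentials $\bar d_i,\bar d_j>0$; price sensitivities $\alpha_i,\alpha_j>0$; substitutability $\varepsilon\in(0,1]$; per-unit production costs $C_i,C_j\ge0$, per-unit raw-material cost $C_S\ge0$; operating costs $O_i,O_j,O_S\ge 0$. A coalition $\mathbb V$ (supplier plus in-house manufacturer $M_i$) quotes a consumer price $p$ and a wholesale price $q$; the out-house manufacturer $M_j$ then quotes a consumer price $\tilde p$. Demands: $D_i=(\bar d_i-\alpha_i p+\varepsilon\alpha_j\tilde p)^+$, $D_j=(\bar d_j-\alpha_j\tilde p+\varepsilon\alpha_i p)^+$. Maximal prices: $p_{mx}=(\bar d_i+\varepsilon\bar d_j)/\alpha_i$, $\tilde p_{mx}=(\bar d_j+\varepsilon\bar d_i)/\alpha_j$. Let $p_{sw}=\bar d_i/\alpha_i+\sqrt{\alpha_jO_j}/(\varepsilon\alpha_i)$ and $$\theta(p)=\begin{cases}\dfrac{\bar d_j+\varepsilon\alpha_ip-\alpha_jC_j-2\sqrt{\alpha_jO_j}}{\alpha_j}, & p<p_{sw},\\[2mm] \dfrac{\bar d_j+\varepsilon\bar d_i-\alpha_jC_j}{\alpha_j}-\dfrac{\alpha_jO_j}{\alpha_j(\varepsilon\alpha_ip-\varepsilon\bar d_i)}, & p\ge p_{sw}.\end{cases}$$ When $q\le\theta(p)$, $M_j$'s best response is $\tilde p^*(p,q)=\min\{(\bar d_j+\varepsilon\alpha_ip)/(2\alpha_j)+(C_j+q)/2,\ \tilde p_{mx}\}$ (when $q>\theta(p)$,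 $M_j$ does not operate). Co-existence region: $\mathcal F_{co}=\{(p,q)\in(0,\infty)^2: q\le\theta(p)\}$. For $(p,q)\in\mathcal F_{co}$ the coalition's utility is $$U_{\mathbb V}(p,q)=(\bar d_i-\alpha_ip+\varepsilon\alpha_j\tilde p^*(p,q))^+(p-C_i-C_S)+(\bar d_j+\varepsilon\alpha_ip-\alpha_j\tilde p^*(p,q))^+(q-C_S)-O_i-O_S.$$ Unconstrained function: $U(p,q)$ is the same expression with $(\cdot)^+$ removed and $\tilde p^*(p,q)$ replaced by $(\bar d_j+\varepsilon\alpha_ip)/(2\alpha_j)+(C_j+q)/2$; equivalently $U(p,q)=w_1p^2+w_2pq+w_3q^2+w_4p+w_5q+w_6$ with $w_1=-\alpha_i(1-\varepsilon^2/2)$, $w_2=\varepsilon(\alpha_i+\alpha_j)/2$, $w_3=-\alpha_j/2$, $w_4=\tfrac12\big(2\bar d_i+\varepsilon\bar d_j+\varepsilon\alpha_jC_j-\varepsilon\alpha_iC_S+2\alpha_i(1-\varepsilon^2/2)(C_i+C_S)\big)$, $w_5=-\varepsilon\alpha_j(C_i+C_S)/2+(\bar d_j-\alpha_jC_j+\alpha_jC_S)/2$, and $w_6$ a constant. Its critical point is $p^*_{co}=-(2w_3w_4-w_2w_5)/(4w_1w_3-w_2^2)$, $q^*_{co}=-(w_2p^*_{co}+w_5)/(2w_3)$. Define $\phi(p)=(\bar d_j+2\varepsilon\bar d_i-\varepsilon\alpha_ip-\alpha_jC_j)/\alpha_j$ and $\psi(q)=\big(2\bar d_i+\varepsilon\bar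 d_j+\varepsilon\alpha_j(C_j+q)\big)/((2-\varepsilon^2)\alpha_i)$. Then $$\mathcal F^+_{co}=\{(p,q)\in[0,\infty)^2: p\le\min\{p_{mx},\psi(q)\},\ q\le\min\{\theta(p),\phi(p)\}\},$$ the region where both manufacturers have positive demand and $M_j$'s price is unsaturated. Lines: $\mathbb L_1=\{q=\phi(p)\}$, $\mathbb L_2=\{p=\psi(q)\}$, $\mathbb L_3=\{q=(\bar d_j+\varepsilon\alpha_ip-\alpha_jC_j-2\sqrt{\alpha_jO_j})/\alpha_j\}$, $\mathbb L_4=\{p=p_{mx}\}$. Assumption (A.1): $\bar d_i\ge\alpha_i(C_S+C_i)+2\sqrt{\alpha_i(O_S+O_i)}$ and $\bar d_j\ge\alpha_j(C_S+C_j)+2\max\{\sqrt{2\alpha_j(O_S+O_i)},\sqrt{\alpha_jO_j}\}$. Assumption (A.2): $\varepsilon\le 2\sqrt{\alpha_jO_j}/(\alpha_jC_i)$. *)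

theory Defs
  imports "HOL-Analysis.Analysis"
begin

text \<open>Parameters, always passed in the order
  di dj ai aj eps Ci Cj CS Oi Oj OS
  (market potentials, price sensitivities, substitutability, production costs,
   raw-material cost, operating costs).\<close>

definition pos_part :: "real \<Rightarrow> real" where
  "pos_part x = max x 0"

definition p_mx :: "real \<Rightarrow> real \<Rightarrow> real \<Rightarrow> real \<Rightarrow> real \<Rightarrow> real" where
  "p_mx di dj ai aj eps = (di + eps * dj) / ai"

definition pt_mx :: "real \<Rightarrow> real \<Rightarrow> real \<Rightarrow> real \<Rightarrow> real \<Rightarrow> real" where
  "pt_mx di dj ai aj eps = (dj + eps * di) / aj"

definition p_sw :: "real \<Rightarrow> real \<Rightarrow> real \<Rightarrow> real \<Rightarrow> real \<Rightarrow> real" where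
  "p_sw di ai aj eps Oj = di / ai + sqrt (aj * Oj) / (eps * ai)"

definition theta :: "real \<Rightarrow> real \<Rightarrow> real \<Rightarrow> real \<Rightarrow> real \<Rightarrow> real \<Rightarrow> real \<Rightarrow> real \<Rightarrow> real" where
  "theta di dj ai aj eps Cj Oj p =
     (if p < p_sw di ai aj eps Oj
      then (dj + eps * ai * p - aj * Cj - 2 * sqrt (aj * Oj)) / aj
      else (dj + eps * di - aj * Cj) / aj - (aj * Oj) / (aj * (eps * ai * p - eps * di)))"

definition phi :: "real \<Rightarrow> real \<Rightarrow> real \<Rightarrow> real \<Rightarrow> real \<Rightarrow> real \<Rightarrow> real \<Rightarrow> real" where
  "phi di dj ai aj eps Cj p = (dj + 2 * eps * di - eps * ai * p - aj * Cj) / aj"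

definition psi :: "real \<Rightarrow> real \<Rightarrow> real \<Rightarrow> real \<Rightarrow> real \<Rightarrow> real \<Rightarrow> real \<Rightarrow> real" where
  "psi di dj ai aj eps Cj q = (2 * di + eps * dj + eps * aj * (Cj + q)) / ((2 - eps^2) * ai)"

text \<open>Best response of the out-house manufacturer M_j (valid when q \<le> theta p).\<close>
definition pt_star :: "real \<Rightarrow> real \<Rightarrow> real \<Rightarrow> real \<Rightarrow> real \<Rightarrow> real \<Rightarrow> real \<Rightarrow> real \<Rightarrow> real" where
  "pt_star di dj ai aj eps Cj p q =
     min ((dj + eps * ai * p) / (2 * aj) + (Cj + q) / 2) (pt_mx di dj ai aj eps)"

definition UV :: "real \<Rightarrow> real \<Rightarrow> real \<Rightarrow> real \<Rightarrow> real \<Rightarrow> real \<Rightarrow> real \<Rightarrow> real \<Rightarrow> real \<Rightarrow> real \<Rightarrow> real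
                  \<Rightarrow> real \<times> real \<Rightarrow> real" where
  "UV di dj ai aj eps Ci Cj CS Oi Oj OS z =
     (let p = fst z; q = snd z; pt = pt_star di dj ai aj eps Cj p q in
      pos_part (di - ai * p + eps * aj * pt) * (p - Ci - CS)
      + pos_part (dj + eps * ai * p - aj * pt) * (q - CS) - Oi - OS)"

definition w1 :: "real \<Rightarrow> real \<Rightarrow> real" where
  "w1 ai eps = - ai * (1 - eps^2 / 2)"
definition w2 :: "real \<Rightarrow> real \<Rightarrow> real \<Rightarrow> real" where
  "w2 ai aj eps = eps * (ai + aj) / 2"
definition w3 :: "real \<Rightarrow> real" where
  "w3 aj = - aj / 2"
definition w4 :: "real \<Rightarrow> real \<Rightarrow> real \<Rightarrow> real \<Rightarrow> real \<Rightarrow> real \<Rightarrow> real \<Rightarrow> real \<Rightarrow> real" where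
  "w4 di dj ai aj eps Ci Cj CS =
     (2 * di + eps * dj + eps * aj * Cj - eps * ai * CS + 2 * ai * (1 - eps^2 / 2) * (Ci + CS)) / 2"
definition w5 :: "real \<Rightarrow> real \<Rightarrow> real \<Rightarrow> real \<Rightarrow> real \<Rightarrow> real \<Rightarrow> real" where
  "w5 dj aj eps Ci Cj CS = - eps * aj * (Ci + CS) / 2 + (dj - aj * Cj + aj * CS) / 2"

definition p_co :: "real \<Rightarrow> real \<Rightarrow> real \<Rightarrow> real \<Rightarrow> real \<Rightarrow> real \<Rightarrow> real \<Rightarrow> real \<Rightarrow> real" where
  "p_co di dj ai aj eps Ci Cj CS =
     - (2 * w3 aj * w4 di dj ai aj eps Ci Cj CS - w2 ai aj eps * w5 dj aj eps Ci Cj CS)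
       / (4 * w1 ai eps * w3 aj - (w2 ai aj eps)^2)"

definition q_co :: "real \<Rightarrow> real \<Rightarrow> real \<Rightarrow> real \<Rightarrow> real \<Rightarrow> real \<Rightarrow> real \<Rightarrow> real \<Rightarrow> real" where
  "q_co di dj ai aj eps Ci Cj CS =
     - (w2 ai aj eps * p_co di dj ai aj eps Ci Cj CS + w5 dj aj eps Ci Cj CS) / (2 * w3 aj)"

definition Fco_plus :: "real \<Rightarrow> real \<Rightarrow> real \<Rightarrow> real \<Rightarrow> real \<Rightarrow> real \<Rightarrow> real \<Rightarrow> (real \<times> real) set" where
  "Fco_plus di dj ai aj eps Cj Oj =
     {(p, q). 0 \<le> p \<and> 0 \<le> q
        \<and> p \<le> min (p_mx di dj ai aj eps) (psi di dj ai aj eps Cj q)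
        \<and> q \<le> min (theta di dj ai aj eps Cj Oj p) (phi di dj ai aj eps Cj p)}"

definition Line :: "real \<Rightarrow> real \<Rightarrow> real \<Rightarrow> real \<Rightarrow> real \<Rightarrow> real \<Rightarrow> real \<Rightarrow> nat \<Rightarrow> (real \<times> real) set" where
  "Line di dj ai aj eps Cj Oj l =
     (if l = 1 then {(p, q). q = phi di dj ai aj eps Cj p}
      else if l = 2 then {(p, q). p = psi di dj ai aj eps Cj q}
      else if l = 3 then {(p, q). q = (dj + eps * ai * p - aj * Cj - 2 * sqrt (aj * Oj)) / aj}
      else if l = 4 then {(p, q). p = p_mx di dj ai aj eps}
      else {})"

definition max0 :: "('a \<Rightarrow> real) \<Rightarrow> 'a set \<Rightarrow> real" where
  "max0 f S = (if S = {} then 0 else Sup (f ` S))"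

end

theory Submission imports Defs begin

definition Uq :: "real \<Rightarrow> real \<Rightarrow> real \<Rightarrow> real \<Rightarrow> real \<Rightarrow> real \<Rightarrow> real \<Rightarrow> real \<Rightarrow> real \<Rightarrow> real \<Rightarrow> real \<Rightarrow> real \<Rightarrow> real" where
  "Uq di dj ai aj eps Ci Cj CS Oi OS p q =
     (di - ai*p + eps*aj*((dj + eps*ai*p)/(2*aj) + (Cj+q)/2))*(p-Ci-CS)
     + (dj + eps*ai*p - aj*((dj + eps*ai*p)/(2*aj) + (Cj+q)/2))*(q-CS) - Oi - OS"

definition g1 where "g1 di dj ai aj eps Ci Cj CS p q =
  2 * w1 ai eps * p + w2 ai aj eps * q + w4 di dj ai aj eps Ci Cj CS"
definition g2 where "g2 dj ai aj eps Ci Cj CS p q =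
  w2 ai aj eps * p + 2 * w3 aj * q + w5 dj aj eps Ci Cj CS"

lemma taylor:
  assumes "aj \<noteq> 0"
  shows "Uq di dj ai aj eps Ci Cj CS Oi OS (p+a) (q+b) = Uq di dj ai aj eps Ci Cj CS Oi OS p q
     + g1 di dj ai aj eps Ci Cj CS p q * a + g2 dj ai aj eps Ci Cj CS p q * b
     + w1 ai eps * a^2 + w2 ai aj eps * a * b + w3 aj * b^2"
  using assms unfolding Uq_def g1_def g2_def w1_def w2_def w3_def w4_def w5_def
  by (simp add: field_simps power2_eq_square)

lemma form_nonpos:
  fixes W1 W2 W3 a b :: real
  assumes "W1 < 0" "4*W1*W3 - W2^2 > 0"
  shows "W1*a^2 + W2*a*b + W3*b^2 \<le> 0"
proof -
  have e: "4*W1*(W1*a^2 + W2*a*b + W3*b^2) = (2*W1*a+W2*b)^2 + (4*W1*W3 - W2^2)*b^2"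
    by (simp add: power2_eq_square algebra_simps)
  have "(2*W1*a+W2*b)^2 + (4*W1*W3 - W2^2)*b^2 \<ge> 0" using assms by simp
  hence "4*W1*(W1*a^2 + W2*a*b + W3*b^2) \<ge> 0" using e by simp
  thus ?thesis using assms(1) by (simp add: zero_le_mult_iff)
qed

lemma lin2: "(2::real)*X = Y - Z \<Longrightarrow> Z \<le> Y \<Longrightarrow> 0 \<le> X" by linarith
lemma lin3: "(2::real)*X = A - B \<Longrightarrow> B \<le> A - 2 * s \<Longrightarrow> 0 \<le> s \<Longrightarrow> 0 \<le> X" by linarith

lemma step_pos:
  fixes g w e :: real
  assumes "w < 0" "g > 0" "e > 0"
  shows "\<exists>t. 0 < t \<and> t < e \<and> g*t + w*t^2 > 0"
proof -
  define t where "t = min (e/2) (g/(-2*w))"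
  have "g/(-2*w) > 0" using assms by (intro divide_pos_pos) auto
  hence t0: "t > 0" using assms by (simp add: t_def)
  have "t \<le> g/(-2*w)" by (simp add: t_def)
  hence "t * (-2*w) \<le> (g/(-2*w)) * (-2*w)" using assms by (intro mult_right_mono) auto
  hence "t * (-2*w) \<le> g" using assms by simp
  hence "-2*(w*t) \<le> g" by (simp add: algebra_simps)
  hence "g + w*t > 0" using assms by linarith
  hence "t*(g + w*t) > 0" using t0 by simp
  moreover have "t < e" using assms by (simp add: t_def)
  ultimately show ?thesis using t0 by (intro exI[of _ t]) (simp add: algebra_simps power2_eq_square)
qed

theorem theorem1:
  fixes di dj ai aj eps Ci Cj CS Oi Oj OS :: real
  assumes pos: "di > 0" "dj > 0" "ai > 0" "aj > 0"
    and eps: "0 < eps" "eps \<le> 1"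
    and costs: "Ci \<ge> 0" "Cj \<ge> 0" "CS \<ge> 0" "Oi \<ge> 0" "Oj \<ge> 0" "OS \<ge> 0"
    and A1: "di \<ge> ai * (CS + Ci) + 2 * sqrt (ai * (OS + Oi))"
            "dj \<ge> aj * (CS + Cj) + 2 * max (sqrt (2 * aj * (OS + Oi))) (sqrt (aj * Oj))"
    and A2: "eps * (aj * Ci) \<le> 2 * sqrt (aj * Oj)"
  shows
    "(let F = Fco_plus di dj ai aj eps Cj Oj;
          U = UV di dj ai aj eps Ci Cj CS Oi Oj OS;
          zs = (p_co di dj ai aj eps Ci Cj CS, q_co di dj ai aj eps Ci Cj CS)
      in (zs \<in> interior F \<longrightarrow> zs \<in> F \<and> (\<forall>z\<in>F. U z \<le> U zs))
       \<and> (zs \<notin> interior F \<longrightarrow>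
            (\<exists>z\<in>F. (\<forall>w\<in>F. U w \<le> U z)
               \<and> U z = Max ((\<lambda>l. max0 U (F \<inter> Line di dj ai aj eps Cj Oj l)) ` {1..4}))))"
proof -
  define pmx where "pmx = p_mx di dj ai aj eps"
  define L3 where "L3 = (\<lambda>p. (dj + eps*ai*p - aj*Cj - 2 * sqrt(aj*Oj))/aj)"
  define ph where "ph = phi di dj ai aj eps Cj"
  define ps where "ps = psi di dj ai aj eps Cj"
  define th where "th = theta di dj ai aj eps Cj Oj"
  define F where "F = Fco_plus di dj ai aj eps Cj Oj"
  define U where "U = UV di dj ai aj eps Ci Cj CS Oi Oj OS"
  define V where "V = (\<lambda>z. Uq di dj ai aj eps Ci Cj CS Oi OS (fst z) (snd z))"
  define W1 where "W1 = w1 ai eps"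
  define W2 where "W2 = w2 ai aj eps"
  define W3 where "W3 = w3 aj"
  define W4 where "W4 = w4 di dj ai aj eps Ci Cj CS"
  define W5 where "W5 = w5 dj aj eps Ci Cj CS"
  define G1 where "G1 = g1 di dj ai aj eps Ci Cj CS"
  define G2 where "G2 = g2 dj ai aj eps Ci Cj CS"
  define D where "D = 4*W1*W3 - W2^2"
  define K where "K = aj*W4 + W2*W5"
  define pc where "pc = p_co di dj ai aj eps Ci Cj CS"
  define qc where "qc = q_co di dj ai aj eps Ci Cj CS"
  define sO where "sO = sqrt(aj*Oj)"
  have sO0: "sO \<ge> 0" using mult_nonneg_nonneg[of aj Oj] pos costs by (simp add: sO_def)
  have sO2: "sO^2 = aj*Oj" using mult_nonneg_nonneg[of aj Oj] pos costs by (simp add: sO_def)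
  have dj3: "dj \<ge> aj*(CS+Cj) + 2* sO" using A1(2) unfolding sO_def by linarith
  have A2': "eps*aj*Ci \<le> 2* sO" using A2 by (simp add: sO_def mult.assoc)
  have e2: "eps^2 \<le> eps" "eps^2 \<le> 1" using eps by (auto simp: power2_eq_square mult_le_one)
  have tay: "\<And>p q a b. V (p+a, q+b) = V (p,q) + G1 p q * a + G2 p q * b + W1*a^2 + W2*a*b + W3*b^2"
    using taylor[of aj] pos unfolding V_def G1_def G2_def W1_def W2_def W3_def by simp
  have W1n: "W1 < 0" using pos e2 by (simp add: W1_def w1_def)
  have W2p: "W2 > 0" using pos eps by (simp add: W2_def w2_def)
  have W3n: "W3 = -aj/2" by (simp add: W3_def w3_def)
  have W4p: "W4 > 0"
  proof -
    have "eps*(ai*CS) \<le> ai*CS" using eps pos costs by (simp add: mult_left_le_one_le)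
    moreover have "eps^2*(ai*CS) \<le> ai*CS" using e2 pos costs by (simp add: mult_left_le_one_le)
    moreover have "eps^2*(ai*Ci) \<le> ai*Ci" using e2 pos costs by (simp add: mult_left_le_one_le)
    moreover have "0 \<le> eps*dj" "0 \<le> eps*aj*Cj" "0 \<le> ai*Ci" "0 \<le> ai*CS" using eps pos costs by auto
    ultimately show ?thesis using pos unfolding W4_def w4_def by (simp add: algebra_simps; linarith)
  qed
  have W5p: "W5 \<ge> 0"
  proof -
    have "eps*(aj*CS) \<le> aj*CS" using eps pos costs by (simp add: mult_left_le_one_le)
    moreover have "0 \<le> aj*CS" using pos costs by simp
    ultimately show ?thesis using dj3 A2' unfolding W5_def w5_def by (simp add: field_simps; linarith)
  qed
  have Kp: "K > 0" unfolding K_def using W4p W5p W2p pos by (simp add: add_pos_nonneg)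
  have pc_eq: "pc = K / D" unfolding pc_def p_co_def D_def K_def
    by (simp add: W1_def[symmetric] W2_def[symmetric] W3_def[symmetric] W4_def[symmetric] W5_def[symmetric] W3n)
  have qc_eq: "qc = (W2*pc + W5)/aj" unfolding qc_def q_co_def pc_def
    using pos by (simp add: W2_def[symmetric] W5_def[symmetric] W3n[unfolded W3_def]) (simp add: field_simps)
  have key: "\<And>p q. aj * G1 p q + W2 * G2 p q = -D*p + K"
    unfolding G1_def G2_def g1_def g2_def D_def K_def
    by (simp add: W1_def[symmetric] W2_def[symmetric] W3_def[symmetric] W4_def[symmetric] W5_def[symmetric] W3n algebra_simps power2_eq_square)
  have ajn: "aj \<noteq> 0" using pos by simp
  have minth: "\<And>p. min (th p) (ph p) = min (L3 p) (ph p)"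
  proof -
    fix p
    show "min (th p) (ph p) = min (L3 p) (ph p)"
    proof (cases "p < p_sw di ai aj eps Oj")
      case True then show ?thesis by (simp add: th_def theta_def L3_def)
    next
      case False
      define x where "x = eps*ai*p - eps*di"
      have "p \<ge> di/ai + sO/(eps*ai)" using False by (simp add: p_sw_def sO_def)
      hence "eps*ai*p \<ge> eps*ai*(di/ai + sO/(eps*ai))" using eps pos by (simp add: mult_left_mono)
      moreover have "eps*ai*(di/ai + sO/(eps*ai)) = eps*di + sO" using eps pos by (simp add: field_simps)
      ultimately have xs: "x \<ge> sO" by (simp add: x_def)
      have thx: "th p = (dj + eps*di - aj*Cj)/aj - (aj*Oj)/(aj*x)"
        using False by (simp add: th_def theta_def x_def)
      have phx: "ph p = (dj + eps*di - aj*Cj)/aj - x/aj"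
        using ajn by (simp add: ph_def phi_def x_def field_simps)
      have L3x: "L3 p = (dj + eps*di - aj*Cj)/aj + (x - 2* sO)/aj"
        using ajn by (simp add: L3_def x_def sO_def field_simps)
      have "(aj*Oj)/(aj*x) \<le> x/aj"
      proof (cases "x = 0")
        case True then show ?thesis by simp
      next
        case False
        hence xp: "x > 0" using xs sO0 by linarith
        have "sO* sO \<le> x*x" using xs sO0 by (intro mult_mono) auto
        hence "aj*Oj \<le> x*x" using sO2 by (simp add: power2_eq_square)
        thus ?thesis using xp pos by (simp add: field_simps)
      qed
      hence "ph p \<le> th p" using thx phx by simp
      moreover have "ph p \<le> L3 p"
      proof -
        have "L3 p - ph p = (x - 2 * sO)/aj + x/aj" using phx L3x by simp
        also have "\<dots> = 2*(x - sO)/aj" using ajn by (simp add: field_simps)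
        finally have "L3 p - ph p = 2*(x - sO)/aj" .
        moreover have "2*(x - sO)/aj \<ge> 0" using xs pos by simp
        ultimately show ?thesis by simp
      qed
      ultimately show ?thesis by simp
    qed
  qed
  have Fmem: "\<And>p q. (p,q) \<in> F \<longleftrightarrow> 0 \<le> p \<and> 0 \<le> q \<and> p \<le> pmx \<and> p \<le> ps q \<and> q \<le> L3 p \<and> q \<le> ph p"
  proof -
    fix p q
    have "(p,q) \<in> F \<longleftrightarrow> 0 \<le> p \<and> 0 \<le> q \<and> p \<le> min pmx (ps q) \<and> q \<le> min (th p) (ph p)"
      unfolding F_def Fco_plus_def pmx_def ps_def th_def ph_def by simp
    also have "\<dots> \<longleftrightarrow> 0 \<le> p \<and> 0 \<le> q \<and> p \<le> min pmx (ps q) \<and> q \<le> min (L3 p) (ph p)"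
      using minth by simp
    finally show "(p,q) \<in> F \<longleftrightarrow> 0 \<le> p \<and> 0 \<le> q \<and> p \<le> pmx \<and> p \<le> ps q \<and> q \<le> L3 p \<and> q \<le> ph p"
      by simp
  qed
  have den2: "(2 - eps^2)*ai > 0" using e2 pos by simp
  have UVeq: "\<And>z. z \<in> F \<Longrightarrow> U z = V z"
  proof -
    fix z assume zF: "z \<in> F"
    obtain p q where z: "z = (p,q)" by (cases z)
    have h: "0 \<le> p" "0 \<le> q" "p \<le> pmx" "p \<le> ps q" "q \<le> L3 p" "q \<le> ph p" using zF z Fmem by auto
    define P where "P = (dj + eps*ai*p)/(2*aj) + (Cj+q)/2"
    have "q*aj \<le> dj + 2*eps*di - eps*ai*p - aj*Cj" using h(6) pos by (simp add: ph_def phi_def pos_le_divide_eq)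
    hence num: "dj + eps*ai*p + aj*(Cj+q) \<le> 2*(dj + eps*di)" by (simp add: algebra_simps)
    have "P = (dj + eps*ai*p + aj*(Cj+q))/(2*aj)" using ajn by (simp add: P_def field_simps)
    also have "\<dots> \<le> 2*(dj + eps*di)/(2*aj)" using num pos by (intro divide_right_mono) auto
    also have "\<dots> = pt_mx di dj ai aj eps" using ajn by (simp add: pt_mx_def field_simps)
    finally have "P \<le> pt_mx di dj ai aj eps" .
    hence ptP: "pt_star di dj ai aj eps Cj p q = P" by (simp add: pt_star_def P_def min_def)
    have "p*((2 - eps^2)*ai) \<le> 2*di + eps*dj + eps*aj*(Cj+q)"
      using h(4) den2 by (simp add: ps_def psi_def pos_le_divide_eq)
    moreover have "2*(di - ai*p + eps*aj*P) = 2*di + eps*dj + eps*aj*(Cj+q) - p*((2 - eps^2)*ai)"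
      using ajn by (simp add: P_def field_simps power2_eq_square)
    ultimately have Di: "di - ai*p + eps*aj*P \<ge> 0" by (rule lin2[rotated])
    have "q*aj \<le> dj + eps*ai*p - aj*Cj - 2* sO" using h(5) pos by (simp add: L3_def sO_def pos_le_divide_eq)
    moreover have "2*(dj + eps*ai*p - aj*P) = dj + eps*ai*p - aj*Cj - aj*q"
      using ajn by (simp add: P_def field_simps)
    ultimately have Dj: "dj + eps*ai*p - aj*P \<ge> 0" using sO0 lin3[of "dj + eps*ai*p - aj*P" "dj + eps*ai*p - aj*Cj" "aj*q" sO]
      by (simp add: mult.commute)
    show "U z = V z" unfolding U_def V_def UV_def z Let_def Uq_def
      using ptP Di Dj by (simp add: pos_part_def P_def)
  qed
  have G2c: "D \<noteq> 0 \<Longrightarrow> G2 pc qc = 0"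
    using ajn unfolding G2_def g2_def by (simp add: W2_def[symmetric] W3_def[symmetric] W5_def[symmetric] W3n qc_eq field_simps)
  have G1c: "D \<noteq> 0 \<Longrightarrow> G1 pc qc = 0"
  proof -
    assume "D \<noteq> 0"
    hence "aj * G1 pc qc = 0" using key[of pc qc] G2c pc_eq by simp
    thus ?thesis using ajn by simp
  qed
  have part1: "(pc,qc) \<in> interior F \<Longrightarrow> (pc,qc) \<in> F \<and> (\<forall>z\<in>F. U z \<le> U (pc,qc))"
  proof -
    assume I: "(pc,qc) \<in> interior F"
    have inF: "(pc,qc) \<in> F" using I interior_subset by blast
    have Dp: "D > 0"
    proof (rule ccontr)
      assume "\<not> D > 0"
      hence "pc \<le> 0" using Kp by (simp add: pc_eq divide_nonneg_nonpos)
      obtain e where e: "e > 0" "ball (pc,qc) e \<subseteq> F" using I mem_interior by blast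
      have "dist (pc,qc) (pc - e/2, qc) = e/2" using e by (simp add: dist_Pair_Pair dist_real_def)
      hence "(pc - e/2, qc) \<in> F" using e by auto
      hence "0 \<le> pc - e/2" using Fmem by blast
      thus False using \<open>pc \<le> 0\<close> e by simp
    qed
    have "\<forall>z\<in>F. U z \<le> U (pc,qc)"
    proof
      fix z assume zF: "z \<in> F"
      have T: "\<And>a b. V (pc + a, qc + b) = V (pc,qc) + W1*a^2 + W2*a*b + W3*b^2"
        using tay G1c G2c Dp by simp
      have "V z = V (pc + (fst z - pc), qc + (snd z - qc))" by simp
      also have "\<dots> = V (pc,qc) + W1*(fst z - pc)^2 + W2*(fst z - pc)*(snd z - qc) + W3*(snd z - qc)^2"
        by (rule T)
      also have "\<dots> \<le> V (pc,qc)" using form_nonpos[OF W1n Dp[unfolded D_def], of "fst z - pc" "snd z - qc"] by linarith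
      finally show "U z \<le> U (pc,qc)" using UVeq zF inF by simp
    qed
    thus ?thesis using inF by simp
  qed
  have part2: "(pc,qc) \<notin> interior F \<Longrightarrow>
     (\<exists>z\<in>F. (\<forall>w\<in>F. U w \<le> U z)
        \<and> U z = Max ((\<lambda>l. max0 U (F \<inter> Line di dj ai aj eps Cj Oj l)) ` {1..4}))"
  proof -
    assume NI: "(pc,qc) \<notin> interior F"
    define r where "r = sqrt (ai*(OS+Oi))"
    have r0: "r \<ge> 0" using mult_nonneg_nonneg[of ai "OS+Oi"] pos costs by (simp add: r_def)
    have r2: "r*r = ai*(OS+Oi)" using mult_nonneg_nonneg[of ai "OS+Oi"] pos costs
      by (simp add: r_def)
    define p0 where "p0 = Ci + CS + r/ai"
    have p00: "p0 \<ge> 0" using costs r0 pos by (simp add: p0_def)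
    have aip0: "ai*p0 = ai*(CS+Ci) + r" using pos by (simp add: p0_def field_simps)
    have aip0d: "ai*p0 \<le> di - r" using aip0 A1(1) r_def by linarith
    have eaip0: "eps*(ai*p0) \<le> eps*di" using aip0d r0 eps by (intro mult_left_mono) auto
    have eaip00: "0 \<le> eps*(ai*p0)" using eps pos p00 by simp
    have z0F: "(p0, CS) \<in> F"
    proof -
      have "p0 \<le> pmx" using aip0d r0 eps pos mult_nonneg_nonneg[of dj eps] by (simp add: pmx_def p_mx_def pos_le_divide_eq mult.commute; linarith)
      moreover have "p0 \<le> ps CS"
      proof -
        have "(2 - eps^2)*ai \<le> 2*ai" using mult_nonneg_nonneg[of "eps^2" ai] pos by (simp add: algebra_simps)
        hence "p0*((2 - eps^2)*ai) \<le> p0*(2*ai)" using p00 by (intro mult_left_mono) auto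
        also have "\<dots> \<le> 2*di + eps*dj + eps*aj*(Cj+CS)"
        proof -
          have "0 \<le> eps*dj" "0 \<le> eps*aj*(Cj+CS)" using eps pos costs by simp_all
          thus ?thesis using aip0d r0 by (simp add: algebra_simps; linarith)
        qed
        finally show ?thesis using den2 by (simp add: ps_def psi_def pos_le_divide_eq)
      qed
      moreover have "CS \<le> L3 p0"
      proof -
        have e1: "aj*(CS+Cj) = aj*CS + aj*Cj" "eps*ai*p0 = eps*(ai*p0)" by (simp_all add: algebra_simps)
        have "aj*CS \<le> dj + eps*(ai*p0) - aj*Cj - 2 * sO" using dj3 eaip00 e1 by linarith
        hence "CS*aj \<le> dj + eps*ai*p0 - aj*Cj - 2 * sO" by (simp add: ac_simps)
        moreover have "L3 p0 = (dj + eps*ai*p0 - aj*Cj - 2 * sO)/aj" by (simp add: L3_def sO_def)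
        ultimately show ?thesis using pos by (simp add: pos_le_divide_eq)
      qed
      moreover have "CS \<le> ph p0"
      proof -
        have e1: "aj*(CS+Cj) = aj*CS + aj*Cj" "eps*ai*p0 = eps*(ai*p0)" by (simp_all add: algebra_simps)
        have "0 \<le> eps*di" using eps pos by simp
        hence "aj*CS \<le> dj + 2*(eps*di) - eps*(ai*p0) - aj*Cj" using dj3 eaip0 e1 sO0 by linarith
        hence "CS*aj \<le> dj + 2*eps*di - eps*ai*p0 - aj*Cj" by (simp add: ac_simps)
        thus ?thesis using pos by (simp add: ph_def phi_def pos_le_divide_eq)
      qed
      ultimately show ?thesis using Fmem p00 costs by simp
    qed
    have Vz0: "V (p0, CS) \<ge> 0"
    proof -
      define E where "E = eps*aj*((dj + eps*ai*p0)/(2*aj) + (Cj+CS)/2)"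
      have E0: "E \<ge> 0" using eps pos costs eaip00 by (simp add: E_def)
      have "V (p0,CS) = (di - ai*p0 + E)*(r/ai) - Oi - OS"
        by (simp add: V_def Uq_def E_def p0_def)
      also have "(di - ai*p0 + E)*(r/ai) \<ge> r*(r/ai)"
        using aip0d E0 r0 pos by (intro mult_right_mono) auto
      moreover have "r*(r/ai) = OS + Oi" using r2 pos by (simp add: field_simps)
      ultimately show ?thesis by linarith
    qed
    define G where "G = {z. 0 \<le> fst z \<and> 0 \<le> snd z \<and> fst z \<le> pmx \<and> fst z \<le> ps (snd z)
                            \<and> snd z \<le> L3 (fst z) \<and> snd z \<le> ph (fst z)}"
    have FG: "F = G" unfolding G_def set_eq_iff by (auto simp: Fmem)
    have clG: "closed G" unfolding G_def L3_def ph_def phi_def ps_def psi_def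
      by (intro closed_Collect_conj closed_Collect_le continuous_intros) (use den2 pos in auto)
    have "G \<subseteq> {0..pmx} \<times> {0..ph 0}"
    proof
      fix z assume "z \<in> G"
      hence h: "0 \<le> fst z" "0 \<le> snd z" "fst z \<le> pmx" "snd z \<le> ph (fst z)" unfolding G_def by auto
      have "ph (fst z) \<le> ph 0" using h eps pos by (simp add: ph_def phi_def divide_right_mono)
      thus "z \<in> {0..pmx} \<times> {0..ph 0}" using h by (cases z) auto
    qed
    hence "G = G \<inter> ({0..pmx} \<times> {0..ph 0})" by blast
    hence cG: "compact G" using clG by (metis closed_Int_compact compact_Icc compact_Times)
    have cV: "continuous_on F V" unfolding V_def Uq_def by (intro continuous_intros) (use ajn in auto)
    obtain z where zF: "z \<in> F" and zmax: "\<forall>w\<in>F. V w \<le> V z"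
      using continuous_attains_sup[OF cG[folded FG] _ cV] z0F by blast
    obtain p q where zpq: "z = (p,q)" by (cases z)
    have hz: "0 \<le> p" "0 \<le> q" "p \<le> pmx" "p \<le> ps q" "q \<le> L3 p" "q \<le> ph p" using zF zpq Fmem by auto
    have online: "\<exists>l\<in>{1..4}. z \<in> Line di dj ai aj eps Cj Oj l"
    proof (rule ccontr)
      assume "\<not> ?thesis"
      hence "z \<notin> Line di dj ai aj eps Cj Oj 1" "z \<notin> Line di dj ai aj eps Cj Oj 2"
            "z \<notin> Line di dj ai aj eps Cj Oj 3" "z \<notin> Line di dj ai aj eps Cj Oj 4" by auto
      hence "q \<noteq> ph p" "p \<noteq> ps q" "q \<noteq> L3 p" "p \<noteq> pmx"
        by (auto simp: Line_def zpq ph_def ps_def L3_def pmx_def)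
      hence st: "p < pmx" "p < ps q" "q < L3 p" "q < ph p" using hz by auto
      define S where "S = {z. fst z < pmx \<and> fst z < ps (snd z) \<and> snd z < L3 (fst z) \<and> snd z < ph (fst z)}"
      have oS: "open S" unfolding S_def L3_def ph_def phi_def ps_def psi_def
        by (intro open_Collect_conj open_Collect_less continuous_intros) (use den2 pos in auto)
      have "z \<in> S" using st zpq by (simp add: S_def)
      then obtain e where e: "e > 0" "ball z e \<subseteq> S" using oS open_contains_ball by blast
      have SF: "\<And>a b. (a,b) \<in> S \<Longrightarrow> 0 \<le> a \<Longrightarrow> 0 \<le> b \<Longrightarrow> (a,b) \<in> F"
        unfolding S_def using Fmem by auto
      have Sx: "\<And>t. \<bar>t\<bar> < e \<Longrightarrow> (p+t, q) \<in> S"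
      proof -
        fix t :: real assume "\<bar>t\<bar> < e"
        moreover have "dist z (p+t,q) = \<bar>t\<bar>" by (simp add: zpq dist_Pair_Pair dist_real_def)
        ultimately show "(p+t,q) \<in> S" using e by auto
      qed
      have Sy: "\<And>t. \<bar>t\<bar> < e \<Longrightarrow> (p, q+t) \<in> S"
      proof -
        fix t :: real assume "\<bar>t\<bar> < e"
        moreover have "dist z (p,q+t) = \<bar>t\<bar>" by (simp add: zpq dist_Pair_Pair dist_real_def)
        ultimately show "(p,q+t) \<in> S" using e by auto
      qed
      have tx: "\<And>t. V (p+t,q) = V (p,q) + (G1 p q * t + W1*t^2)" using tay[of p _ q 0] by simp
      have ty: "\<And>t. V (p,q+t) = V (p,q) + (G2 p q * t + W3*t^2)" using tay[of p 0 q] by simp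
      have W3n': "W3 < 0" using W3n pos by simp
      have c1: "G1 p q \<le> 0"
      proof (rule ccontr)
        assume "\<not> G1 p q \<le> 0"
        hence gp: "G1 p q > 0" by simp
        obtain t where t: "0 < t" "t < e" "G1 p q * t + W1*t^2 > 0" using step_pos[OF W1n gp e(1)] by blast
        have "(p+t,q) \<in> F" using SF[OF Sx] t hz by simp
        hence "V (p+t,q) \<le> V z" using zmax by blast
        thus False using tx[of t] t zpq by simp
      qed
      have c2: "G2 p q \<le> 0"
      proof (rule ccontr)
        assume "\<not> G2 p q \<le> 0"
        hence gp: "G2 p q > 0" by simp
        obtain t where t: "0 < t" "t < e" "G2 p q * t + W3*t^2 > 0" using step_pos[OF W3n' gp e(1)] by blast
        have "(p,q+t) \<in> F" using SF[OF Sy] t hz by simp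
        hence "V (p,q+t) \<le> V z" using zmax by blast
        thus False using ty[of t] t zpq by simp
      qed
      have pp: "p > 0"
      proof (rule ccontr)
        assume "\<not> p > 0" hence "p = 0" using hz by simp
        hence "G1 p q = W2*q + W4" by (simp add: G1_def g1_def W2_def W4_def)
        thus False using c1 W2p W4p hz by (smt (verit) mult_nonneg_nonneg)
      qed
      have qp: "q > 0"
      proof (rule ccontr)
        assume "\<not> q > 0" hence "q = 0" using hz by simp
        hence "G2 p q = W2*p + W5" by (simp add: G2_def g2_def W2_def W5_def)
        thus False using c2 W2p W5p pp by (smt (verit) mult_pos_pos)
      qed
      have c3: "G1 p q \<ge> 0"
      proof (rule ccontr)
        assume "\<not> G1 p q \<ge> 0"
        hence gp: "- G1 p q > 0" by simp
        have mp: "min e p > 0" using e(1) pp by simp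
        obtain t where t: "0 < t" "t < min e p" "(- G1 p q) * t + W1*t^2 > 0"
          using step_pos[OF W1n gp mp] by blast
        have "(p+(-t),q) \<in> F" by (rule SF[OF Sx]) (use t hz in auto)
        hence "V (p+(-t),q) \<le> V z" using zmax by blast
        thus False using tx[of "-t"] t zpq by simp
      qed
      have c4: "G2 p q \<ge> 0"
      proof (rule ccontr)
        assume "\<not> G2 p q \<ge> 0"
        hence gp: "- G2 p q > 0" by simp
        have mp: "min e q > 0" using e(1) qp by simp
        obtain t where t: "0 < t" "t < min e q" "(- G2 p q) * t + W3*t^2 > 0"
          using step_pos[OF W3n' gp mp] by blast
        have "(p,q+(-t)) \<in> F" by (rule SF[OF Sy]) (use t hz in auto)
        hence "V (p,q+(-t)) \<le> V z" using zmax by blast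
        thus False using ty[of "-t"] t zpq by simp
      qed
      have g0: "G1 p q = 0" "G2 p q = 0" using c1 c2 c3 c4 by auto
      hence Dpk: "D*p = K" using key[of p q] by simp
      have Dp: "D > 0"
      proof (rule ccontr)
        assume "\<not> D > 0" hence "D*p \<le> 0" using pp by (simp add: mult_nonpos_nonneg)
        thus False using Dpk Kp by simp
      qed
      have "D*pc = K" using pc_eq Dp by simp
      hence ppc: "p = pc" using Dpk Dp by (metis mult_left_cancel less_irrefl)
      have "W2*p - aj*q + W5 = 0" using g0(2) unfolding G2_def g2_def
        by (simp add: W2_def[symmetric] W3_def[symmetric] W5_def[symmetric] W3n)
      hence qqc: "q = qc" using qc_eq ppc ajn by (simp add: field_simps)
      define e' where "e' = min e (min p q)"
      have "ball z e' \<subseteq> F"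
      proof
        fix y assume y: "y \<in> ball z e'"
        hence "y \<in> S" using e by (auto simp: e'_def)
        moreover have "dist (fst z) (fst y) < p" using y dist_fst_le[of z y] by (auto simp: e'_def)
        hence "fst y > 0" using zpq by (auto simp: dist_real_def)
        moreover have "dist (snd z) (snd y) < q" using y dist_snd_le[of z y] by (auto simp: e'_def)
        hence "snd y > 0" using zpq by (auto simp: dist_real_def)
        ultimately show "y \<in> F" using SF[of "fst y" "snd y"] by simp
      qed
      moreover have "e' > 0" using e pp qp by (simp add: e'_def)
      ultimately have "z \<in> interior F" using mem_interior by blast
      thus False using NI zpq ppc qqc by simp
    qed
    then obtain l0 where l0: "l0 \<in> {1..4}" "z \<in> Line di dj ai aj eps Cj Oj l0" by blast
    have Umax: "\<forall>w\<in>F. U w \<le> U z" using zmax UVeq zF by simp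
    have "V (p0, CS) \<le> V z" using z0F zmax by blast
    hence U0: "U z \<ge> 0" using Vz0 UVeq[OF zF] by simp
    have le: "\<And>l. max0 U (F \<inter> Line di dj ai aj eps Cj Oj l) \<le> U z"
    proof -
      fix l
      show "max0 U (F \<inter> Line di dj ai aj eps Cj Oj l) \<le> U z"
      proof (cases "F \<inter> Line di dj ai aj eps Cj Oj l = {}")
        case True thus ?thesis using U0 by (simp add: max0_def)
      next
        case False thus ?thesis using Umax by (auto simp: max0_def intro!: cSup_least)
      qed
    qed
    have eq: "max0 U (F \<inter> Line di dj ai aj eps Cj Oj l0) = U z"
      using l0 zF Umax by (auto simp: max0_def intro!: cSup_eq_maximum)
    have mem: "U z \<in> (\<lambda>l. max0 U (F \<inter> Line di dj ai aj eps Cj Oj l)) ` {1..4}"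
      using eq l0(1) by (metis image_eqI)
    have "Max ((\<lambda>l. max0 U (F \<inter> Line di dj ai aj eps Cj Oj l)) ` {1..4}) = U z"
      by (rule Max_eqI) (use le mem in auto)
    thus ?thesis using zF Umax by metis
  qed
  show ?thesis
    unfolding Let_def F_def[symmetric] U_def[symmetric] pc_def[symmetric] qc_def[symmetric]
    using part1 part2 by blast
qed

end
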